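(* Let $k>0$, $N\in\mathbb{N}^+$, $h=\frac1{N+1}$, and let $\mathcal{A}_h$ be the matrix defined below. Then for every such $h\in(0,1)$, $i\mathbb{R}\subset\rho(\mathcal{A}_h)$, i.e. $\mathcal{A}_h$ has no purely imaginary eigenvalues.
   Context: Let $D_h$ be the $(N+1)\times(N+1)$ lower bidiagonal matrix with $\frac12$ on the diagonal and first subdiagonal, and $M_h$ the $(N+1)\times(N+1)$ upper bidiagonal matrix with $-\frac1h$ on the diagonal and $\frac1h$ on the first superdiagonal; $e_{N+1}=(0,\dots,0,1)^\top$. For $Y_h=(y_1,\dots,y_{N+1})^\top\in\mathbb{C}^{N+1}$ let $Z_h$ solve $D_h^\top Z_h=-M_h^\top Y_h+\tfrac{ik}2y_{N+1}e_{N+1}$ and set $\mathcal{A}_hY_h=D_h^{-1}[-iM_hZ_h-\tfrac kh y_{N+1}e_{N+1}]$. This is the order-reduction semi-discretization of $w_t=-iw_{xx}$, $w(0,t)=0$, $w_x(1,t)=-ikw(1,t)$. $\rho(\cdot)$ denotes the resolvent set. *)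

theory Defs
  imports "Jordan_Normal_Form.Gauss_Jordan_Elimination"
begin

text \<open>Matrices are (N+1)x(N+1), indices 0..N (index N corresponds to y_{N+1}).\<close>

definition D_h :: "nat \<Rightarrow> complex mat" where
  "D_h N = mat (N+1) (N+1) (\<lambda>(i,j). if i = j \<or> i = j + 1 then 1/2 else 0)"

definition M_h :: "nat \<Rightarrow> real \<Rightarrow> complex mat" where
  "M_h N h = mat (N+1) (N+1)
     (\<lambda>(i,j). if i = j then - complex_of_real (1/h)
              else if j = i + 1 then complex_of_real (1/h) else 0)"

definition E_last :: "nat \<Rightarrow> complex mat" where
  "E_last N = mat (N+1) (N+1) (\<lambda>(i,j). if i = N \<and> j = N then 1 else 0)"

text \<open>A_h Y = D^{-1}[-i M Z - (k/h) y_{N+1} e], with D^T Z = -M^T Y + (ik/2) y_{N+1} e.\<close>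
definition A_h :: "nat \<Rightarrow> real \<Rightarrow> real \<Rightarrow> complex mat" where
  "A_h N h k =
     (let D = D_h N; M = M_h N h; E = E_last N;
          Dinv = the (mat_inverse D); DTinv = the (mat_inverse (transpose_mat D));
          Zmap = DTinv * (- transpose_mat M + (\<i> * complex_of_real k / 2) \<cdot>\<^sub>m E)
      in Dinv * ((- \<i>) \<cdot>\<^sub>m (M * Zmap) - complex_of_real (k / h) \<cdot>\<^sub>m E))"

definition resolvent_set :: "complex mat \<Rightarrow> complex set" where
  "resolvent_set A = {z. invertible_mat (z \<cdot>\<^sub>m 1\<^sub>m (dim_row A) - A)}"

end

theory Submission
  imports Defs "Jordan_Normal_Form.Determinant"
begin


lemma Im_cnj_self: "Im (u * cnj u) = 0"
  by simp

lemma Im_ofreal_mult: "Im (complex_of_real x * w) = x * Im w" by simp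

lemma Im_add_l: "Im (x + y) = Im x + Im y" by simp
lemma Im_2diff: "Im (2 * (x - y)) = 2 * Im x - 2 * Im y" by simp

lemma core:
  fixes a zz :: "nat \<Rightarrow> complex" and r k \<omega> :: real
  assumes r: "r > 0" and k: "k > 0" and a0: "a 0 = 0"
    and F1: "\<And>i. i \<le> N \<Longrightarrow> of_real \<omega> * (a (Suc i) + a i) / 2 = - of_real r * (zz (Suc i) - zz i)"
    and F2: "\<And>i. i \<le> N \<Longrightarrow> (zz i + zz (Suc i)) / 2 = of_real r * (a (Suc i) - a i)"
    and bd: "zz (Suc N) = - (\<i> * of_real k) * a (Suc N)"
  shows "\<forall>j \<le> Suc N. a j = 0"
proof -
  define c where "c = (of_real r :: complex)"
  have c0: "c \<noteq> 0" using r by (simp add: c_def)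
  have step: "Im (zz (Suc i) * cnj (a (Suc i))) = Im (zz i * cnj (a i))" if i: "i \<le> N" for i
  proof -
    let ?p = "zz (Suc i)" and ?q = "zz i" and ?A = "a (Suc i)" and ?B = "a i"
    have id: "2 * (?p * cnj ?A - ?q * cnj ?B) = (?p - ?q) * cnj (?A + ?B) + (?q + ?p) * cnj (?A - ?B)"
      by (simp add: algebra_simps)
    have e1: "?p - ?q = - (of_real \<omega> / (2 * c)) * (?A + ?B)"
      using F1[OF i] c0 unfolding c_def[symmetric] by (simp add: field_simps)
    have e2: "?A - ?B = (1 / (2 * c)) * (?q + ?p)"
      using F2[OF i] c0 unfolding c_def[symmetric] by (simp add: field_simps)
    have "(?p - ?q) * cnj (?A + ?B) = of_real (- \<omega> / (2 * r)) * ((?A + ?B) * cnj (?A + ?B))"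
    proof -
      have cc: "- (of_real \<omega> / (2 * c)) = of_real (- \<omega> / (2 * r))" unfolding c_def
        by (simp only: of_real_minus of_real_divide of_real_mult of_real_numeral minus_divide_left)
      show ?thesis unfolding e1 cc by (rule mult.assoc)
    qed
    hence i1: "Im ((?p - ?q) * cnj (?A + ?B)) = 0" by (simp only: Im_ofreal_mult Im_cnj_self mult_zero_right)
    have "(?q + ?p) * cnj (?A - ?B) = of_real (1 / (2 * r)) * ((?q + ?p) * cnj (?q + ?p))"
    proof -
      have cc: "cnj (1 / (2 * c)) = of_real (1 / (2 * r))" unfolding c_def
        by (simp only: complex_cnj_divide complex_cnj_one complex_cnj_mult complex_cnj_numeral complex_cnj_complex_of_real of_real_divide of_real_mult of_real_numeral of_real_1)
      have cx: "cnj ((1 / (2 * c)) * (?q + ?p)) = of_real (1 / (2 * r)) * cnj (?q + ?p)"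
        by (simp only: complex_cnj_mult cc)
      have "(?q + ?p) * cnj (?A - ?B) = (?q + ?p) * cnj ((1 / (2 * c)) * (?q + ?p))"
        by (simp only: e2)
      also have "\<dots> = (?q + ?p) * (of_real (1 / (2 * r)) * cnj (?q + ?p))"
        by (simp only: cx)
      also have "\<dots> = of_real (1 / (2 * r)) * ((?q + ?p) * cnj (?q + ?p))"
        by (rule mult.left_commute)
      finally show ?thesis .
    qed
    hence i2: "Im ((?q + ?p) * cnj (?A - ?B)) = 0" by (simp only: Im_ofreal_mult Im_cnj_self mult_zero_right)
    have "Im (2 * (?p * cnj ?A - ?q * cnj ?B)) = 0" unfolding id Im_add_l using i1 i2 by (simp only: add_0_left)
    thus ?thesis unfolding Im_2diff by linarith
  qed
  have "\<forall>j. j \<le> Suc N \<longrightarrow> Im (zz j * cnj (a j)) = 0"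
  proof (intro allI)
    fix j show "j \<le> Suc N \<longrightarrow> Im (zz j * cnj (a j)) = 0"
    proof (induction j)
      case 0 show ?case using a0 by simp
    next
      case (Suc j)
      show ?case
      proof
        assume "Suc j \<le> Suc N"
        hence jN: "j \<le> N" by simp
        hence "Im (zz j * cnj (a j)) = 0" using Suc.IH by simp
        thus "Im (zz (Suc j) * cnj (a (Suc j))) = 0" using step[OF jN] by linarith
      qed
    qed
  qed
  hence "Im (zz (Suc N) * cnj (a (Suc N))) = 0" by simp
  hence "k * (cmod (a (Suc N)))^2 = 0" unfolding bd
    by (simp add: complex_mult_cnj cmod_def power2_eq_square algebra_simps)
  hence aN: "a (Suc N) = 0" using k by simp
  hence zN: "zz (Suc N) = 0" using bd by simp
  show ?thesis
  proof (cases "of_real \<omega> = - 4 * c^2")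
    case False
    have this_all: "\<forall>m. m \<le> Suc N \<longrightarrow> a (Suc N - m) = 0 \<and> zz (Suc N - m) = 0"
    proof (intro allI)
      fix m show "m \<le> Suc N \<longrightarrow> a (Suc N - m) = 0 \<and> zz (Suc N - m) = 0"
      proof (induction m)
        case 0 then show ?case using aN zN by simp
      next
        case (Suc m)
        show ?case
        proof
          assume m: "Suc m \<le> Suc N"
          define i where "i = N - m"
          have i: "i \<le> N" and si: "Suc i = Suc N - m" and ii: "Suc N - Suc m = i"
            using m by (auto simp: i_def)
          have z1: "a (Suc i) = 0" "zz (Suc i) = 0" using Suc m si by auto
          have g2: "zz i = - 2 * c * a i" using F2[OF i] unfolding z1 c_def[symmetric] by simp
          have g1: "of_real \<omega> * a i / 2 = c * zz i" using F1[OF i] unfolding z1 c_def[symmetric] by simp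
          have "(of_real \<omega> + 4 * c^2) * a i = 0" using g1 g2 by (simp add: algebra_simps power2_eq_square)
          moreover have "of_real \<omega> + 4 * c^2 \<noteq> 0" 
          proof
            assume "of_real \<omega> + 4 * c^2 = 0"
            hence "of_real \<omega> = - 4 * c^2" by (simp add: eq_neg_iff_add_eq_0)
            thus False using False by simp
          qed
          ultimately have "a i = 0" by simp
          then show "a (Suc N - Suc m) = 0 \<and> zz (Suc N - Suc m) = 0" using g2 ii by simp
        qed
      qed
    qed
    show ?thesis
    proof (intro allI impI)
      fix j assume j: "j \<le> Suc N"
      have "j = Suc N - (Suc N - j)" using j by simp
      then show "a j = 0" using spec[OF this_all, of "Suc N - j"] by simp
    qed
  next
    case True
    have up: "zz (Suc i) = 2 * c * a (Suc i)" and dn: "zz i = - 2 * c * a i" if i: "i \<le> N" for i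
    proof -
      have "- 4 * c^2 * (a (Suc i) + a i) / 2 = - c * (zz (Suc i) - zz i)"
        using F1[OF i] unfolding c_def[symmetric] True .
      moreover have "- 4 * c^2 * (a (Suc i) + a i) / 2 = - (2 * c^2 * (a (Suc i) + a i))" by simp
      ultimately have "2 * c^2 * (a (Suc i) + a i) = c * (zz (Suc i) - zz i)" by simp
      hence "c * (2 * c * (a (Suc i) + a i)) = c * (zz (Suc i) - zz i)"
        by (simp add: power2_eq_square ac_simps)
      hence "c * (zz (Suc i) - zz i) = c * (2 * c * (a (Suc i) + a i))" by (rule sym)
      hence f1: "zz (Suc i) - zz i = 2 * c * (a (Suc i) + a i)"
        using c0 by (simp only: mult_cancel_left simp_thms)
      have f2: "zz i + zz (Suc i) = 2 * c * (a (Suc i) - a i)"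
        using F2[OF i] unfolding c_def[symmetric] by simp
      have "2 * zz (Suc i) = (zz (Suc i) - zz i) + (zz i + zz (Suc i))" by simp
      also have "\<dots> = 2 * c * (a (Suc i) + a i) + 2 * c * (a (Suc i) - a i)" by (simp only: f1 f2)
      also have "\<dots> = 2 * (2 * c * a (Suc i))" by (simp add: algebra_simps)
      finally show "zz (Suc i) = 2 * c * a (Suc i)" by simp
      have "2 * zz i = (zz i + zz (Suc i)) - (zz (Suc i) - zz i)" by simp
      also have "\<dots> = 2 * c * (a (Suc i) - a i) - 2 * c * (a (Suc i) + a i)" by (simp only: f1 f2)
      also have "\<dots> = 2 * (- 2 * c * a i)" by (simp add: algebra_simps)
      finally show "zz i = - 2 * c * a i" by simp
    qed
    show ?thesis
    proof (intro allI impI)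
      fix j assume j: "j \<le> Suc N"
      show "a j = 0"
      proof (cases "j = 0 \<or> j = Suc N")
        case True then show ?thesis using a0 aN by auto
      next
        case False
        then obtain i where ji: "j = Suc i" and i: "i \<le> N" "Suc i \<le> N" using j by (cases j) auto
        have "2 * c * a j = - 2 * c * a j" using up[OF i(1)] dn[OF i(2)] ji by simp
        then show ?thesis using c0 by simp
      qed
    qed
  qed
qed


lemma ifmult: "(if P then c else 0) * (x::complex) = (if P then c * x else 0)" by simp
lemma sum2: "finite S \<Longrightarrow> (\<Sum>j\<in>S. (if j = a then c else 0) * (f j::complex)) = (if a \<in> S then c * f a else 0)"
  by (simp only: ifmult) (simp add: sum.delta)
lemma sum3: "finite S \<Longrightarrow> (\<Sum>j\<in>S. (if j = a \<and> Q then c else 0) * (f j::complex)) = (if a \<in> S \<and> Q then c * f a else 0)"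
  by (cases Q) (simp_all only: ifmult sum.delta' simp_thms, simp_all)

lemma D_carrier: "D_h N \<in> carrier_mat (N+1) (N+1)" by (simp add: D_h_def)
lemma M_carrier: "M_h N h \<in> carrier_mat (N+1) (N+1)" by (simp add: M_h_def)
lemma E_carrier: "E_last N \<in> carrier_mat (N+1) (N+1)" by (simp add: E_last_def)

lemma Dv: assumes "V \<in> carrier_vec (N+1)" "i \<le> N"
  shows "(D_h N *\<^sub>v V)$i = (V$i + (if i = 0 then 0 else V$(i-1)))/2"
proof -
  have "(D_h N *\<^sub>v V)$i = (\<Sum>j\<in>{..<N+1}. ((if j = i then 1/2 else 0) + (if j = i - 1 \<and> i > 0 then 1/2 else 0)) * V$j)"
    using assms unfolding D_h_def by (auto simp: scalar_prod_def lessThan_atLeast0 intro!: sum.cong)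
  also have "\<dots> = (\<Sum>j\<in>{..<N+1}. (if j = i then 1/2 else 0) * V$j) + (\<Sum>j\<in>{..<N+1}. (if j = i - 1 \<and> i > 0 then 1/2 else 0) * V$j)"
    by (simp only: distrib_right sum.distrib)
  also have "\<dots> = (V$i + (if i = 0 then 0 else V$(i-1)))/2"
    apply (simp only: sum2 sum3 finite_lessThan)
    using assms(2) by auto
  finally show ?thesis .
qed

lemma DTv: assumes "V \<in> carrier_vec (N+1)" "i \<le> N"
  shows "(transpose_mat (D_h N) *\<^sub>v V)$i = (V$i + (if i < N then V$(i+1) else 0))/2"
proof -
  have "(transpose_mat (D_h N) *\<^sub>v V)$i = (\<Sum>j\<in>{..<N+1}. ((if j = i then 1/2 else 0) + (if j = i + 1 \<and> True then 1/2 else 0)) * V$j)"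
    using assms unfolding D_h_def by (auto simp: scalar_prod_def lessThan_atLeast0 intro!: sum.cong)
  also have "\<dots> = (\<Sum>j\<in>{..<N+1}. (if j = i then 1/2 else 0) * V$j) + (\<Sum>j\<in>{..<N+1}. (if j = i + 1 \<and> True then 1/2 else 0) * V$j)"
    by (simp only: distrib_right sum.distrib)
  also have "\<dots> = (V$i + (if i < N then V$(i+1) else 0))/2"
    apply (simp only: sum2 sum3 finite_lessThan)
    using assms(2) by auto
  finally show ?thesis .
qed

lemma Mv: assumes "V \<in> carrier_vec (N+1)" "i \<le> N"
  shows "(M_h N h *\<^sub>v V)$i = complex_of_real (1/h) * ((if i < N then V$(i+1) else 0) - V$i)"
proof -
  let ?c = "complex_of_real (1/h)"
  have "(M_h N h *\<^sub>v V)$i = (\<Sum>j\<in>{..<N+1}. ((if j = i then - ?c else 0) + (if j = i + 1 \<and> True then ?c else 0)) * V$j)"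
    using assms unfolding M_h_def by (auto simp: scalar_prod_def lessThan_atLeast0 intro!: sum.cong)
  also have "\<dots> = (\<Sum>j\<in>{..<N+1}. (if j = i then - ?c else 0) * V$j) + (\<Sum>j\<in>{..<N+1}. (if j = i + 1 \<and> True then ?c else 0) * V$j)"
    by (simp only: distrib_right sum.distrib)
  also have "\<dots> = ?c * ((if i < N then V$(i+1) else 0) - V$i)"
    apply (simp only: sum2 sum3 finite_lessThan)
    using assms(2) by (auto simp: algebra_simps)
  finally show ?thesis .
qed

lemma MTv: assumes "V \<in> carrier_vec (N+1)" "i \<le> N"
  shows "(transpose_mat (M_h N h) *\<^sub>v V)$i = complex_of_real (1/h) * ((if i = 0 then 0 else V$(i-1)) - V$i)"
proof -
  let ?c = "complex_of_real (1/h)"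
  have "(transpose_mat (M_h N h) *\<^sub>v V)$i = (\<Sum>j\<in>{..<N+1}. ((if j = i then - ?c else 0) + (if j = i - 1 \<and> i > 0 then ?c else 0)) * V$j)"
    using assms unfolding M_h_def by (auto simp: scalar_prod_def lessThan_atLeast0 intro!: sum.cong)
  also have "\<dots> = (\<Sum>j\<in>{..<N+1}. (if j = i then - ?c else 0) * V$j) + (\<Sum>j\<in>{..<N+1}. (if j = i - 1 \<and> i > 0 then ?c else 0) * V$j)"
    by (simp only: distrib_right sum.distrib)
  also have "\<dots> = ?c * ((if i = 0 then 0 else V$(i-1)) - V$i)"
    apply (simp only: sum2 sum3 finite_lessThan)
    using assms(2) by (auto simp: algebra_simps)
  finally show ?thesis .
qed

lemma Ev: assumes "V \<in> carrier_vec (N+1)" "i \<le> N"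
  shows "(E_last N *\<^sub>v V)$i = (if i = N then V$N else 0)"
proof -
  have "(E_last N *\<^sub>v V)$i = (\<Sum>j\<in>{..<N+1}. (if j = N \<and> i = N then 1 else 0) * V$j)"
    using assms unfolding E_last_def by (auto simp: scalar_prod_def lessThan_atLeast0 intro!: sum.cong)
  also have "\<dots> = (if i = N then V$N else 0)"
    apply (simp only: sum3 finite_lessThan)
    using assms(2) by auto
  finally show ?thesis .
qed



lemma D_kernel: assumes V: "V \<in> carrier_vec (N+1)" and DV: "D_h N *\<^sub>v V = 0\<^sub>v (N+1)"
  shows "V = 0\<^sub>v (N+1)"
proof -
  have "\<forall>i. i \<le> N \<longrightarrow> V$i = 0"
  proof (intro allI)
    fix i show "i \<le> N \<longrightarrow> V$i = 0"
    proof (induction i)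
      case 0 show ?case using Dv[OF V, of 0] DV by (auto dest!: arg_cong[where f="\<lambda>v. v$0"])
    next
      case (Suc i)
      show ?case
      proof
        assume i: "Suc i \<le> N"
        have "(D_h N *\<^sub>v V)$(Suc i) = 0" using DV i by simp
        hence "(V$(Suc i) + V$i)/2 = 0" using Dv[OF V i] by simp
        moreover have "V$i = 0" using Suc.IH i by simp
        ultimately show "V$(Suc i) = 0" by simp
      qed
    qed
  qed
  then show ?thesis using V by (intro eq_vecI) auto
qed

lemma det_D: "det (D_h N) \<noteq> 0"
  using det_0_iff_vec_prod_zero_field[OF D_carrier] D_kernel by blast

lemma inv_ex: fixes A :: "complex mat" assumes A: "A \<in> carrier_mat n n" and d: "det A \<noteq> (0::complex)"
  shows "\<exists>B. mat_inverse A = Some B \<and> A * B = 1\<^sub>m n \<and> B * A = 1\<^sub>m n \<and> B \<in> carrier_mat n n"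
proof (cases "mat_inverse A")
  case None
  then have "A \<notin> Units (ring_mat TYPE(complex) n ())" using mat_inverse(1)[OF A, where b="()"] by simp
  moreover have "A \<in> Units (ring_mat TYPE(complex) n ())" by (rule det_non_zero_imp_unit[OF A d])
  ultimately show ?thesis by contradiction
next
  case (Some B)
  then show ?thesis using mat_inverse(2)[OF A Some] by blast
qed

lemma smult_mat_vec: assumes "P \<in> carrier_mat n m" "v \<in> carrier_vec m"
  shows "(a \<cdot>\<^sub>m P) *\<^sub>v v = a \<cdot>\<^sub>v (P *\<^sub>v (v :: complex vec))"
  using assms by (intro eq_vecI) (auto simp: scalar_prod_def sum_distrib_left ac_simps)



lemma key_kernel:
  fixes k h \<omega> :: real and N :: nat and Y Z :: "complex vec"
  assumes k: "k > 0" and h: "h > 0"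
    and Y: "Y \<in> carrier_vec (N+1)" and Z: "Z \<in> carrier_vec (N+1)"
    and E1: "\<And>i. i \<le> N \<Longrightarrow> (\<i> * of_real \<omega>) * (D_h N *\<^sub>v Y)$i
              = - \<i> * (M_h N h *\<^sub>v Z)$i - of_real (k/h) * (E_last N *\<^sub>v Y)$i"
    and E2: "\<And>i. i \<le> N \<Longrightarrow> (transpose_mat (D_h N) *\<^sub>v Z)$i
              = - (transpose_mat (M_h N h) *\<^sub>v Y)$i + (\<i> * of_real k / 2) * (E_last N *\<^sub>v Y)$i"
  shows "Y = 0\<^sub>v (N+1)"
proof -
  define a where "a j = (if j = 0 then 0 else Y$(j-1))" for j
  define zz where "zz j = (if j \<le> N then Z$j else - (\<i> * of_real k) * Y$N)" for j
  have hz: "complex_of_real h \<noteq> 0" using h by simp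
  have F1: "of_real \<omega> * (a (Suc i) + a i) / 2 = - of_real (1/h) * (zz (Suc i) - zz i)" if i: "i \<le> N" for i
  proof -
    have e: "(\<i> * of_real \<omega>) * ((Y$i + (if i = 0 then 0 else Y$(i-1)))/2)
        = - \<i> * (complex_of_real (1/h) * ((if i < N then Z$(i+1) else 0) - Z$i)) - of_real (k/h) * (if i = N then Y$N else 0)"
      using E1[OF i] unfolding Dv[OF Y i] Mv[OF Z i] Ev[OF Y i] .
    have e': "(- \<i>) * ((\<i> * of_real \<omega>) * ((Y$i + (if i = 0 then 0 else Y$(i-1)))/2))
        = (- \<i>) * (- \<i> * (complex_of_real (1/h) * ((if i < N then Z$(i+1) else 0) - Z$i)) - of_real (k/h) * (if i = N then Y$N else 0))"
      using e by simp
    show ?thesis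
    proof (cases "i < N")
      case True
      then show ?thesis using e' unfolding a_def zz_def using i
        by (auto simp: algebra_simps)
    next
      case False
      then have iN: "i = N" using i by simp
      then show ?thesis using e' unfolding a_def zz_def using hz
        by (auto simp: algebra_simps divide_simps)
    qed
  qed
  have F2: "(zz i + zz (Suc i)) / 2 = of_real (1/h) * (a (Suc i) - a i)" if i: "i \<le> N" for i
  proof -
    have e: "(Z$i + (if i < N then Z$(i+1) else 0))/2
        = - (complex_of_real (1/h) * ((if i = 0 then 0 else Y$(i-1)) - Y$i)) + (\<i> * of_real k / 2) * (if i = N then Y$N else 0)"
      using E2[OF i] unfolding DTv[OF Z i] MTv[OF Y i] Ev[OF Y i] .
    show ?thesis
    proof (cases "i < N")
      case True
      then show ?thesis using e unfolding a_def zz_def using i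
        by (auto simp: algebra_simps)
    next
      case False
      then have iN: "i = N" using i by simp
      then show ?thesis using e unfolding a_def zz_def
        by (auto simp: algebra_simps divide_simps)
    qed
  qed
  have bd: "zz (Suc N) = - (\<i> * of_real k) * a (Suc N)" unfolding zz_def a_def by simp
  have a0: "a 0 = 0" unfolding a_def by simp
  have r: "1/h > 0" using h by simp
  have all: "\<forall>j \<le> Suc N. a j = 0" by (rule core[OF r k a0 F1 F2 bd])
  show ?thesis
  proof (rule eq_vecI)
    fix i assume "i < dim_vec (0\<^sub>v (N+1) :: complex vec)"
    then have i: "i < N+1" by simp
    have "a (Suc i) = 0" using all i by simp
    then show "Y$i = 0\<^sub>v (N+1) $ i" using i unfolding a_def by simp
  next
    show "dim_vec Y = dim_vec (0\<^sub>v (N+1) :: complex vec)" using Y by simp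
  qed
qed


theorem lemma4:
  fixes k :: real and N :: nat and h :: real
  assumes "k > 0" and "N \<ge> 1" and "h = 1 / real (N + 1)"
  shows "{\<i> * complex_of_real \<omega> | \<omega>. True} \<subseteq> resolvent_set (A_h N h k)"
proof
  fix z assume "z \<in> {\<i> * complex_of_real \<omega> | \<omega>. True}"
  then obtain \<omega> where z: "z = \<i> * complex_of_real \<omega>" by blast
  define n where "n = N + 1"
  have h: "h > 0" using assms(3) by simp
  define D where "D = D_h N"
  define M where "M = M_h N h"
  define E where "E = E_last N"
  have Dc: "D \<in> carrier_mat n n" unfolding D_def n_def by (rule D_carrier)
  have Mc: "M \<in> carrier_mat n n" unfolding M_def n_def by (rule M_carrier)
  have Ec: "E \<in> carrier_mat n n" unfolding E_def n_def by (rule E_carrier)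
  have DTc: "transpose_mat D \<in> carrier_mat n n" using Dc by simp
  have MTc: "transpose_mat M \<in> carrier_mat n n" using Mc by simp
  obtain Dinv where Dinv: "mat_inverse D = Some Dinv" "D * Dinv = 1\<^sub>m n" "Dinv * D = 1\<^sub>m n" "Dinv \<in> carrier_mat n n"
    using inv_ex[OF Dc] det_D unfolding D_def by blast
  have "det (transpose_mat D) \<noteq> 0" using det_transpose[OF Dc] det_D unfolding D_def by simp
  then obtain DTinv where DTinv: "mat_inverse (transpose_mat D) = Some DTinv" "transpose_mat D * DTinv = 1\<^sub>m n"
     "DTinv * transpose_mat D = 1\<^sub>m n" "DTinv \<in> carrier_mat n n"
    using inv_ex[OF DTc] by blast
  define W where "W = - transpose_mat M + (\<i> * complex_of_real k / 2) \<cdot>\<^sub>m E"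
  define Zmap where "Zmap = DTinv * W"
  define X where "X = (- \<i>) \<cdot>\<^sub>m (M * Zmap) - complex_of_real (k / h) \<cdot>\<^sub>m E"
  have Wc: "W \<in> carrier_mat n n" unfolding W_def using MTc Ec by simp
  have Zc: "Zmap \<in> carrier_mat n n" unfolding Zmap_def using DTinv(4) Wc by simp
  have Xc: "X \<in> carrier_mat n n" unfolding X_def using Mc Zc Ec by (intro minus_carrier_mat) auto
  have Adef: "A_h N h k = Dinv * X"
    unfolding A_h_def Let_def D_def[symmetric] M_def[symmetric] E_def[symmetric] Dinv(1) DTinv(1)
      X_def Zmap_def W_def by simp
  define A where "A = A_h N h k"
  have Ac: "A \<in> carrier_mat n n" unfolding A_def Adef using Dinv(4) Xc by simp
  define B where "B = z \<cdot>\<^sub>m 1\<^sub>m n - A"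
  have Bc: "B \<in> carrier_mat n n" unfolding B_def using Ac by (intro minus_carrier_mat)
  have kern: "Y = 0\<^sub>v n" if Y: "Y \<in> carrier_vec n" and BY: "B *\<^sub>v Y = 0\<^sub>v n" for Y
  proof -
    have "B *\<^sub>v Y = (z \<cdot>\<^sub>m 1\<^sub>m n) *\<^sub>v Y - A *\<^sub>v Y"
      unfolding B_def by (rule minus_mult_distrib_mat_vec[OF _ Ac Y]) simp
    also have "(z \<cdot>\<^sub>m 1\<^sub>m n) *\<^sub>v Y = z \<cdot>\<^sub>v Y"
      using smult_mat_vec[OF one_carrier_mat Y] Y by simp
    finally have BY2: "B *\<^sub>v Y = z \<cdot>\<^sub>v Y - A *\<^sub>v Y" .
    have AY: "A *\<^sub>v Y = z \<cdot>\<^sub>v Y"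
    proof (rule eq_vecI)
      fix i assume "i < dim_vec (z \<cdot>\<^sub>v Y)"
      then have i: "i < n" using Y by simp
      have "(B *\<^sub>v Y)$i = 0" using BY i by simp
      then have "z * Y$i - (A *\<^sub>v Y)$i = 0" unfolding BY2 using i Y Ac by simp
      then show "(A *\<^sub>v Y)$i = (z \<cdot>\<^sub>v Y)$i" using i Y by simp
    next
      show "dim_vec (A *\<^sub>v Y) = dim_vec (z \<cdot>\<^sub>v Y)" using Ac Y by simp
    qed
    define Z where "Z = Zmap *\<^sub>v Y"
    have Zv: "Z \<in> carrier_vec n" unfolding Z_def using Zc Y by simp
    have DZ: "transpose_mat D *\<^sub>v Z = - (transpose_mat M *\<^sub>v Y) + (\<i> * complex_of_real k / 2) \<cdot>\<^sub>v (E *\<^sub>v Y)"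
    proof -
      have "transpose_mat D *\<^sub>v Z = (transpose_mat D * DTinv) *\<^sub>v (W *\<^sub>v Y)"
        unfolding Z_def Zmap_def using DTc DTinv(4) Wc Y by simp
      also have "\<dots> = W *\<^sub>v Y" unfolding DTinv(2) using Wc Y by simp
      also have "\<dots> = (- transpose_mat M) *\<^sub>v Y + ((\<i> * complex_of_real k / 2) \<cdot>\<^sub>m E) *\<^sub>v Y"
        unfolding W_def by (rule add_mult_distrib_mat_vec[of _ n n]) (use MTc Ec Y in simp_all)
      also have "\<dots> = - (transpose_mat M *\<^sub>v Y) + (\<i> * complex_of_real k / 2) \<cdot>\<^sub>v (E *\<^sub>v Y)"
        using smult_mat_vec[OF Ec Y] MTc Y by simp
      finally show ?thesis .
    qed
    have DA: "z \<cdot>\<^sub>v (D *\<^sub>v Y) = (- \<i>) \<cdot>\<^sub>v (M *\<^sub>v Z) - complex_of_real (k / h) \<cdot>\<^sub>v (E *\<^sub>v Y)"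
    proof -
      have "z \<cdot>\<^sub>v (D *\<^sub>v Y) = D *\<^sub>v (A *\<^sub>v Y)" unfolding AY using mult_mat_vec[OF Dc Y] by simp
      also have "\<dots> = (D * Dinv) *\<^sub>v (X *\<^sub>v Y)" unfolding A_def Adef using Dc Dinv(4) Xc Y by simp
      also have "\<dots> = X *\<^sub>v Y" unfolding Dinv(2) using Xc Y by simp
      also have "\<dots> = ((- \<i>) \<cdot>\<^sub>m (M * Zmap)) *\<^sub>v Y - (complex_of_real (k / h) \<cdot>\<^sub>m E) *\<^sub>v Y"
        unfolding X_def by (rule minus_mult_distrib_mat_vec[of _ n n]) (use Mc Zc Ec Y in simp_all)
      also have "\<dots> = (- \<i>) \<cdot>\<^sub>v (M *\<^sub>v Z) - complex_of_real (k / h) \<cdot>\<^sub>v (E *\<^sub>v Y)"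
        using smult_mat_vec[OF mult_carrier_mat[OF Mc Zc] Y] smult_mat_vec[OF Ec Y] Mc Zc Y unfolding Z_def by simp
      finally show ?thesis .
    qed
    have Yn: "Y \<in> carrier_vec (N+1)" and Zn: "Z \<in> carrier_vec (N+1)" using Y Zv unfolding n_def by auto
    have E1: "(\<i> * of_real \<omega>) * (D_h N *\<^sub>v Y)$i
              = - \<i> * (M_h N h *\<^sub>v Z)$i - of_real (k/h) * (E_last N *\<^sub>v Y)$i" if i: "i \<le> N" for i
    proof -
      have "(z \<cdot>\<^sub>v (D *\<^sub>v Y))$i = ((- \<i>) \<cdot>\<^sub>v (M *\<^sub>v Z) - complex_of_real (k / h) \<cdot>\<^sub>v (E *\<^sub>v Y))$i"
        unfolding DA ..
      then show ?thesis using i Dc Mc Ec Y Zv unfolding z D_def[symmetric] M_def[symmetric] E_def[symmetric] n_def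
        by simp
    qed
    have E2: "(transpose_mat (D_h N) *\<^sub>v Z)$i
              = - (transpose_mat (M_h N h) *\<^sub>v Y)$i + (\<i> * of_real k / 2) * (E_last N *\<^sub>v Y)$i" if i: "i \<le> N" for i
    proof -
      have "(transpose_mat D *\<^sub>v Z)$i = (- (transpose_mat M *\<^sub>v Y) + (\<i> * complex_of_real k / 2) \<cdot>\<^sub>v (E *\<^sub>v Y))$i"
        unfolding DZ ..
      then show ?thesis using i Dc Mc Ec Y Zv unfolding D_def[symmetric] M_def[symmetric] E_def[symmetric] n_def
        by simp
    qed
    show ?thesis using key_kernel[OF assms(1) h Yn Zn E1 E2] unfolding n_def .
  qed
  have "det B \<noteq> 0"
    using det_0_iff_vec_prod_zero_field[OF Bc] kern by blast
  then obtain B' where B': "B * B' = 1\<^sub>m n" "B' * B = 1\<^sub>m n" "B' \<in> carrier_mat n n"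
    using inv_ex[OF Bc] by blast
  have "invertible_mat B"
    unfolding invertible_mat_def inverts_mat_def square_mat.simps using B' Bc by auto
  moreover have "dim_row (A_h N h k) = n" using Ac unfolding A_def by simp
  ultimately show "z \<in> resolvent_set (A_h N h k)"
    unfolding resolvent_set_def B_def A_def by simp
qed

end
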